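(* Assume the setting and standing assumption below. Then the sequence $\{\|g_{k,1}\|\}_{k\in\mathbb{N}}$ converges to zero $R$-linearly: there exist constants $c_1>0$ and $c_2\in(0,1)$, where $c_2$ depends only on $m$, $\rho$ and the eigenvalues of $A$, such that $$\|g_{k,1}\|\le c_1c_2^k\|g_{1,1}\|\quad\text{for all }k\in\mathbb{N}.$$
   Context: Setting: $A\in\mathbb{R}^{n\times n}$ symmetric positive definite with eigenvalues $0<\lambda_1\le\cdots\le\lambda_n$; $b\in\mathbb{R}^n$, $f(x)=\tfrac12x^TAx-b^Tx$, $g_{k,j}=\nabla f(x_{k,j})=Ax_{k,j}-b$. LMSD method with history length $m\in\mathbb{N}$ and tolerance $0$: given $x_{1,1}$ and positive $\alpha_{1,1},\dots,\alpha_{1,m}$, for cycles $k=1,2,\dots$ and $j=1,\dots,m$ set $x_{k,j+1}=x_{k,j}-\alpha_{k,j}g_{k,j}$; set $x_{k+1,1}=x_{k,m+1}$; let $G_k=[g_{k,1}\ \cdots\ g_{k,m}]$, take a thin QR factorization $G_k=Q_kR_k$ ($Q_k^TQ_k=I_m$, $R_k$ upper triangular), $T_k=Q_k^TAQ_k$ with eigenvalues $\theta_{k,1}\ge\cdots\ge\theta_{k,m}$, and set $\alpha_{k+1,j}=\theta_{k,j}^{-1}$. Standing assumption: $g_{k,j}\ne0$ for all $(k,j)$; for every $k$, $G_k$ has linearly independent columns (so $R_k$ is nonsingular); and there is $\rho\ge1$ with $\|R_k^{-1}\|\le\rho\|g_{k,1}\|^{-1}$ for all $k$ (spectral norm). 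*)

theory Defs
  imports "Jordan_Normal_Form.Jordan_Normal_Form"
begin

definition vnorm :: "real vec \<Rightarrow> real" where
  "vnorm v = sqrt (v \<bullet> v)"

definition spec_norm :: "real mat \<Rightarrow> real" where
  "spec_norm M = Sup {vnorm (M *\<^sub>v v) | v. v \<in> carrier_vec (dim_col M) \<and> vnorm v = 1}"

definition cols_mat :: "nat \<Rightarrow> nat \<Rightarrow> (nat \<Rightarrow> real vec) \<Rightarrow> real mat" where
  "cols_mat n m c = mat n m (\<lambda>(i, j). c (j + 1) $ i)"

definition eigs_with_mult :: "nat \<Rightarrow> real mat \<Rightarrow> (nat \<Rightarrow> real) \<Rightarrow> bool" where
  "eigs_with_mult d M lam \<longleftrightarrow> M \<in> carrier_mat d d \<and>
     char_poly M = (\<Prod>i\<in>{1..d}. [:- lam i, 1:])"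

end

theory Submission
  imports Defs "Jordan_Normal_Form.Schur_Decomposition"
begin


lemma conj_real_vec: "conjugate (v :: real vec) = v"
  by (rule eq_vecI, auto)

lemma tMt_entry:
  fixes W M :: "real mat"
  assumes W: "W \<in> carrier_mat n k" and M: "M \<in> carrier_mat n n" and i: "i < k" and j: "j < k"
  shows "(transpose_mat W * M * W) $$ (i,j) = col W i \<bullet> (M *\<^sub>v col W j)"
proof -
  have "transpose_mat W * M * W = transpose_mat W * (M * W)"
    using W M by (intro assoc_mult_mat) auto
  also have "\<dots> $$ (i,j) = row (transpose_mat W) i \<bullet> col (M * W) j"
    using W M i j by (intro index_mult_mat) auto
  also have "\<dots> = col W i \<bullet> (M *\<^sub>v col W j)"
    using W M i j by (simp add: col_mult2 mult_mat_vec_def)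
  finally show ?thesis .
qed

lemma blk_mult:
  fixes a c B C :: "real mat"
  assumes a: "a \<in> carrier_mat 1 1" and c: "c \<in> carrier_mat 1 1"
    and B: "B \<in> carrier_mat k k" and C: "C \<in> carrier_mat k k"
  shows "four_block_mat a (0\<^sub>m 1 k) (0\<^sub>m k 1) B * four_block_mat c (0\<^sub>m 1 k) (0\<^sub>m k 1) C
    = four_block_mat (a * c) (0\<^sub>m 1 k) (0\<^sub>m k 1) (B * C)"
  by (subst mult_four_block_mat[OF a _ _ B c _ _ C]) (use a B c C in auto)

lemma spectral_real_sym:
  fixes A :: "real mat"
  assumes "A \<in> carrier_mat n n" "transpose_mat A = A" "char_poly A = (\<Prod>e\<leftarrow>es. [:-e,1:])"
  shows "\<exists>V. V \<in> carrier_mat n n \<and> transpose_mat V * V = 1\<^sub>m n \<and> diagonal_mat (transpose_mat V * A * V)"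
  using assms
proof (induct es arbitrary: n A)
  case Nil
  with degree_monic_char_poly[of A n] have "n = 0" by auto
  thus ?case using Nil by (intro exI[of _ "1\<^sub>m 0"]) (auto simp: diagonal_mat_def)
next
  case (Cons e es n A)
  from Cons have A: "A \<in> carrier_mat n n" and symA: "transpose_mat A = A" by auto
  let ?cp = "char_poly A"
  from Cons(4)
  have cp: "?cp = [: -e, 1 :] * (\<Prod>e \<leftarrow> es. [:- e, 1:])" by auto
  have mon: "monic (\<Prod>e\<leftarrow> es. [:- e, 1:])" by (rule monic_prod_list, auto)
  have deg: "degree ?cp = Suc (degree (\<Prod>e\<leftarrow> es. [:- e, 1:]))" unfolding cp
    by (subst degree_mult_eq, insert mon, auto)
  with degree_monic_char_poly[OF A] have n: "n \<noteq> 0" by auto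
  define v where "v = find_eigenvector A e"
  define b :: "real vec list" where "b = basis_completion v"
  define ws :: "real vec list" where "ws = gram_schmidt n b"
  define us where "us = map (\<lambda>w. (1 / sqrt (w \<bullet> w)) \<cdot>\<^sub>v w) ws"
  define W where "W = mat_of_cols n us"
  have e: "eigenvalue A e" 
    unfolding eigenvalue_root_char_poly[OF A] cp by simp
  from find_eigenvector[OF A e] have ev: "eigenvector A v e" unfolding v_def .
  from this[unfolded eigenvector_def]
  have v[simp]: "v \<in> carrier_vec n" and v0: "v \<noteq> 0\<^sub>v n" and Av: "A *\<^sub>v v = e \<cdot>\<^sub>v v" using A by auto
  interpret cof_vec_space n "TYPE(real)" .
  from basis_completion[OF v v0, folded b_def]
  have span_b: "span (set b) = carrier_vec n" and dist_b: "distinct b" 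
    and b: "set b \<subseteq> carrier_vec n" and hdb: "hd b = v" by auto
  have indep: "\<not> lin_dep (set b)" using basis_completion[OF v v0, folded b_def] unfolding basis_def by auto
  have len_b: "length b = n"
  proof -
    have "card (set b) = dim" using dim_basis[OF finite_set basis_completion(1)[OF v v0, folded b_def]] by simp
    thus ?thesis using distinct_card[OF dist_b] dim_is_n by auto
  qed
  from hdb len_b n obtain vs where bv: "b = v # vs" by (cases b, auto)
  from gram_schmidt_result[OF b dist_b indep refl, folded ws_def]
  have ws: "set ws \<subseteq> carrier_vec n" "corthogonal ws" "length ws = n" 
    by (auto simp: len_b)
  from gram_schmidt_hd[OF v, of vs, folded bv] have hdws: "hd ws = v" unfolding ws_def .
  have wscar: "\<And>i. i < n \<Longrightarrow> ws ! i \<in> carrier_vec n" using ws by auto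
  have ws_orth: "\<And>i j. i < n \<Longrightarrow> j < n \<Longrightarrow> (ws ! i \<bullet> ws ! j = 0) = (i \<noteq> j)"
    using ws(2) ws(3) unfolding corthogonal_def by (auto simp: conj_real_vec)
  have wpos: "\<And>i. i < n \<Longrightarrow> ws ! i \<bullet> ws ! i > 0"
  proof -
    fix i assume i: "i < n"
    have "ws ! i \<bullet> ws ! i \<ge> 0" unfolding scalar_prod_def by (intro sum_nonneg) auto
    moreover have "ws ! i \<bullet> ws ! i \<noteq> 0" using ws_orth[OF i i] by auto
    ultimately show "ws ! i \<bullet> ws ! i > 0" by auto
  qed
  have uscar: "\<And>i. i < n \<Longrightarrow> us ! i \<in> carrier_vec n" using wscar ws(3) unfolding us_def by auto
  have lus: "length us = n" using ws(3) unfolding us_def by auto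
  have us_orth: "\<And>i j. i < n \<Longrightarrow> j < n \<Longrightarrow> us ! i \<bullet> us ! j = (if i = j then 1 else 0)"
  proof -
    fix i j assume i: "i < n" and j: "j < n"
    have "us ! i \<bullet> us ! j = (1 / sqrt (ws!i \<bullet> ws!i)) * (1 / sqrt (ws!j \<bullet> ws!j)) * (ws ! i \<bullet> ws ! j)"
      unfolding us_def using i j ws(3) wscar[OF i] wscar[OF j] by simp
    also have "\<dots> = (if i = j then 1 else 0)"
    proof (cases "i = j")
      case True
      have p: "ws!i \<bullet> ws!i > 0" using wpos i by auto
      have "sqrt (ws!i \<bullet> ws!i) * sqrt (ws!i \<bullet> ws!i) = ws!i \<bullet> ws!i"
        using p by (simp add: real_sqrt_mult[symmetric])
      thus ?thesis using True p by (simp add: field_simps)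
    next
      case False thus ?thesis using ws_orth[OF i j] by simp
    qed
    finally show "us ! i \<bullet> us ! j = (if i = j then 1 else 0)" .
  qed
  have W: "W \<in> carrier_mat n n" unfolding W_def using lus by (simp add: mat_of_cols_def)
  have colW: "\<And>i. i < n \<Longrightarrow> col W i = us ! i" unfolding W_def using uscar lus
    by (intro col_mat_of_cols) auto
  have WtW: "transpose_mat W * W = 1\<^sub>m n"
  proof (rule eq_matI)
    fix i j assume "i < dim_row (1\<^sub>m n)" "j < dim_col (1\<^sub>m n)"
    hence i: "i < n" and j: "j < n" by auto
    have "(transpose_mat W * W) $$ (i,j) = col W i \<bullet> col W j"
      using W i j by simp
    thus "(transpose_mat W * W) $$ (i,j) = 1\<^sub>m n $$ (i,j)" using us_orth[OF i j] colW i j by simp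
  qed (use W in auto)
  have WWt: "W * transpose_mat W = 1\<^sub>m n"
    using mat_mult_left_right_inverse[OF _ W WtW] W by auto
  define A' where "A' = transpose_mat W * A * W"
  have A': "A' \<in> carrier_mat n n" unfolding A'_def using W A by auto
  have A'e: "\<And>i j. i < n \<Longrightarrow> j < n \<Longrightarrow> A' $$ (i,j) = us ! i \<bullet> (A *\<^sub>v us ! j)"
    unfolding A'_def using tMt_entry[OF W A] colW by auto
  have us0: "us ! 0 = (1 / sqrt (v \<bullet> v)) \<cdot>\<^sub>v v"
    unfolding us_def using hdws n ws(3) by (cases ws) auto
  have Aus0: "A *\<^sub>v us ! 0 = e \<cdot>\<^sub>v us ! 0"
    unfolding us0 using A Av by (auto simp: mult_mat_vec smult_smult_assoc mult.commute)
  have symA': "\<And>i j. i < n \<Longrightarrow> j < n \<Longrightarrow> A' $$ (i,j) = A' $$ (j,i)"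
  proof -
    fix i j assume i: "i < n" and j: "j < n"
    have "transpose_mat A' = A'"
    proof -
      have "transpose_mat A' = transpose_mat W * transpose_mat (transpose_mat W * A)"
        unfolding A'_def using W A by (subst transpose_mult[of _ n n _ n]) auto
      also have "transpose_mat (transpose_mat W * A) = transpose_mat A * W"
        using W A by (subst transpose_mult[of _ n n _ n]) auto
      finally show ?thesis unfolding A'_def using symA W A
        by (simp add: assoc_mult_mat[of _ n n _ n _ n])
    qed
    thus "A' $$ (i,j) = A' $$ (j,i)" using i j A' by (metis carrier_matD index_transpose_mat(1))
  qed
  have col0: "\<And>i. i < n \<Longrightarrow> A' $$ (i,0) = (if i = 0 then e else 0)"
  proof -
    fix i assume i: "i < n"
    have "A' $$ (i,0) = us ! i \<bullet> (e \<cdot>\<^sub>v us ! 0)" using A'e[OF i] n Aus0 by auto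
    also have "\<dots> = e * (us ! i \<bullet> us ! 0)"
      using uscar[OF i] uscar[of 0] n by (intro scalar_prod_smult_right) auto
    finally show "A' $$ (i,0) = (if i = 0 then e else 0)" using us_orth[OF i, of 0] n by auto
  qed
  have row0: "\<And>j. j < n \<Longrightarrow> A' $$ (0,j) = (if j = 0 then e else 0)"
    using symA' col0 n by (metis neq0_conv)
  define A3 where "A3 = mat (n-1) (n-1) (\<lambda>(i,j). A' $$ (Suc i, Suc j))"
  have A3: "A3 \<in> carrier_mat (n-1) (n-1)" unfolding A3_def by auto
  have n1: "n = 1 + (n-1)" using n by auto
  have blk: "A' = four_block_mat (mat 1 1 (\<lambda>_. e)) (0\<^sub>m 1 (n-1)) (0\<^sub>m (n-1) 1) A3"
  proof (rule eq_matI)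
    fix i j assume "i < dim_row (four_block_mat (mat 1 1 (\<lambda>_. e)) (0\<^sub>m 1 (n-1)) (0\<^sub>m (n-1) 1) A3)"
      "j < dim_col (four_block_mat (mat 1 1 (\<lambda>_. e)) (0\<^sub>m 1 (n-1)) (0\<^sub>m (n-1) 1) A3)"
    hence i: "i < n" and j: "j < n" using A3 n by auto
    show "A' $$ (i,j) = four_block_mat (mat 1 1 (\<lambda>_. e)) (0\<^sub>m 1 (n-1)) (0\<^sub>m (n-1) 1) A3 $$ (i,j)"
      using i j col0 row0 A3 unfolding A3_def
      by (cases i; cases j) auto
  qed (use A' A3 n in auto)
  have simw: "similar_mat_wit A' A (transpose_mat W) W"
    unfolding similar_mat_wit_def Let_def using A' A W WtW WWt
    by (auto simp: A'_def)
  have "char_poly A' = char_poly A" 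
    using char_poly_similar simw unfolding similar_mat_def by blast
  also have "char_poly A' = char_poly (mat 1 1 (\<lambda>_. e)) * char_poly A3"
    unfolding blk by (rule char_poly_four_block_zeros_col) (use A3 in auto)
  also have "char_poly (mat 1 1 (\<lambda>_. e)) = [: -e,1 :]"
    by (simp add: char_poly_defs det_def sign_def)
  finally have cp3: "char_poly A3 = (\<Prod> e \<leftarrow> es. [:- e, 1:])" using cp
    by (metis mult_cancel_left pCons_eq_0_iff zero_neq_one)
  have symA3: "transpose_mat A3 = A3"
    unfolding A3_def by (rule eq_matI) (use symA' n in auto)
  from Cons(1)[OF A3 symA3 cp3] obtain V3 where V3: "V3 \<in> carrier_mat (n-1) (n-1)"
    and V3o: "transpose_mat V3 * V3 = 1\<^sub>m (n-1)" and V3d: "diagonal_mat (transpose_mat V3 * A3 * V3)" by auto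
  define F where "F = four_block_mat (1\<^sub>m 1) (0\<^sub>m 1 (n-1)) (0\<^sub>m (n-1) 1) V3"
  have F: "F \<in> carrier_mat n n" unfolding F_def using V3 n by auto
  have Ft: "transpose_mat F = four_block_mat (1\<^sub>m 1) (0\<^sub>m 1 (n-1)) (0\<^sub>m (n-1) 1) (transpose_mat V3)"
    unfolding F_def by (subst transpose_four_block_mat) (use V3 in auto)
  have FtF: "transpose_mat F * F = 1\<^sub>m n"
    unfolding Ft unfolding F_def using V3 V3o
  proof (subst blk_mult)
    show "four_block_mat (1\<^sub>m 1 * 1\<^sub>m 1) (0\<^sub>m 1 (n - 1)) (0\<^sub>m (n - 1) 1) (transpose_mat V3 * V3) = 1\<^sub>m n"
      using V3o n by (simp only: four_block_one_mat) simp
  qed (use V3 in auto)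
  define V where "V = W * F"
  have V: "V \<in> carrier_mat n n" unfolding V_def using W F by auto
  have VtV: "transpose_mat V * V = 1\<^sub>m n"
  proof -
    have "transpose_mat V * V = transpose_mat F * (transpose_mat W * W) * F"
      unfolding V_def using W F
      by (simp add: transpose_mult[of _ n n] assoc_mult_mat[of _ n n _ n _ n])
    thus ?thesis using WtW FtF F by simp
  qed
  have VAV: "transpose_mat V * A * V = transpose_mat F * A' * F"
    unfolding V_def A'_def using W F A
    by (simp add: transpose_mult[of _ n n] assoc_mult_mat[of _ n n _ n _ n])
  have "transpose_mat F * A' * F = four_block_mat (mat 1 1 (\<lambda>_. e)) (0\<^sub>m 1 (n-1)) (0\<^sub>m (n-1) 1) (transpose_mat V3 * A3 * V3)"
  proof -
    let ?E = "mat 1 1 (\<lambda>_. e) :: real mat"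
    have e1: "?E \<in> carrier_mat 1 1" by auto
    have "transpose_mat F * A' = four_block_mat (1\<^sub>m 1 * ?E) (0\<^sub>m 1 (n-1)) (0\<^sub>m (n-1) 1) (transpose_mat V3 * A3)"
      unfolding Ft blk by (rule blk_mult) (use V3 A3 in auto)
    also have "\<dots> * F = four_block_mat (1\<^sub>m 1 * ?E * 1\<^sub>m 1) (0\<^sub>m 1 (n-1)) (0\<^sub>m (n-1) 1) (transpose_mat V3 * A3 * V3)"
      unfolding F_def by (rule blk_mult) (use V3 A3 e1 in auto)
    also have "1\<^sub>m 1 * ?E * 1\<^sub>m 1 = ?E" using e1 by simp
    finally show ?thesis .
  qed
  moreover
  {
    define D3 where "D3 = transpose_mat V3 * A3 * V3"
    have D3: "D3 \<in> carrier_mat (n-1) (n-1)" unfolding D3_def using V3 A3 by auto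
    have D3d: "\<And>i j. i < n-1 \<Longrightarrow> j < n-1 \<Longrightarrow> i \<noteq> j \<Longrightarrow> D3 $$ (i,j) = 0"
      using V3d D3 unfolding D3_def[symmetric] diagonal_mat_def by auto
    have "diagonal_mat (four_block_mat (mat 1 1 (\<lambda>_. e)) (0\<^sub>m 1 (n-1)) (0\<^sub>m (n-1) 1) D3)"
      unfolding diagonal_mat_def
    proof (intro allI impI)
      fix i j assume "i < dim_row (four_block_mat (mat 1 1 (\<lambda>_. e)) (0\<^sub>m 1 (n-1)) (0\<^sub>m (n-1) 1) D3)"
        "j < dim_col (four_block_mat (mat 1 1 (\<lambda>_. e)) (0\<^sub>m 1 (n-1)) (0\<^sub>m (n-1) 1) D3)" "i \<noteq> j"
      thus "four_block_mat (mat 1 1 (\<lambda>_. e)) (0\<^sub>m 1 (n-1)) (0\<^sub>m (n-1) 1) D3 $$ (i,j) = 0"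
        using D3 D3d[of "i-1" "j-1"] n by (cases "i = 0"; cases "j = 0") auto
    qed
    hence "diagonal_mat (transpose_mat F * A' * F)" unfolding calculation D3_def .
  }
  hence "diagonal_mat (transpose_mat V * A * V)" unfolding VAV .
  thus ?case using V VtV by blast
qed



lemma sp_self_nonneg: "(v :: real vec) \<bullet> v \<ge> 0"
  unfolding scalar_prod_def by (intro sum_nonneg) auto

lemma sp_self_pos: assumes v: "(v :: real vec) \<in> carrier_vec k" and nz: "v \<noteq> 0\<^sub>v k" shows "v \<bullet> v > 0"
proof -
  obtain i where i: "i < k" "v $ i \<noteq> 0" using v nz by (metis eq_vecI carrier_vecD index_zero_vec(1,2))
  have "v $ i * v $ i \<le> (\<Sum>j\<in>{0..<k}. v $ j * v $ j)"
    by (rule member_le_sum) (use i in auto)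
  moreover have "v $ i * v $ i > 0" using i(2) by (metis not_real_square_gt_zero)
  ultimately show ?thesis using v unfolding scalar_prod_def by auto
qed

lemma comp_sq_le: assumes v: "(v :: real vec) \<in> carrier_vec k" and i: "i < k" shows "(v $ i)^2 \<le> v \<bullet> v"
proof -
  have "v $ i * v $ i \<le> (\<Sum>j\<in>{0..<k}. v $ j * v $ j)"
    by (rule member_le_sum) (use i in auto)
  thus ?thesis using v unfolding scalar_prod_def by (auto simp: power2_eq_square)
qed

lemma comp_abs_le: assumes v: "(v :: real vec) \<in> carrier_vec k" and i: "i < k" shows "\<bar>v $ i\<bar> \<le> vnorm v"
  unfolding vnorm_def using comp_sq_le[OF v i] real_sqrt_le_mono by fastforce

lemma vnorm_smult: "vnorm (a \<cdot>\<^sub>v v) = \<bar>a\<bar> * vnorm v"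
proof -
  have "(a \<cdot>\<^sub>v v) \<bullet> (a \<cdot>\<^sub>v v) = a^2 * (v \<bullet> v)"
    unfolding scalar_prod_def by (simp add: sum_distrib_left power2_eq_square algebra_simps)
  thus ?thesis unfolding vnorm_def by (simp add: real_sqrt_mult)
qed

lemma vnorm_nonneg: "vnorm v \<ge> 0" unfolding vnorm_def using sp_self_nonneg by auto

lemma spec_norm_bound:
  fixes M :: "real mat"
  assumes M: "M \<in> carrier_mat k k" and v: "v \<in> carrier_vec k"
  shows "vnorm (M *\<^sub>v v) \<le> spec_norm M * vnorm v"
proof (cases "v = 0\<^sub>v k")
  case True
  have "M *\<^sub>v v = 0\<^sub>v k" using M True by auto
  thus ?thesis using True by (simp add: vnorm_def)
next
  case False
  define S where "S = {vnorm (M *\<^sub>v v) | v. v \<in> carrier_vec (dim_col M) \<and> vnorm v = 1}"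
  define B where "B = sqrt (\<Sum>i<k. (\<Sum>j<k. \<bar>M $$ (i,j)\<bar>)^2)"
  have bdd: "bdd_above S"
  proof (rule bdd_aboveI[of _ B])
    fix y assume "y \<in> S"
    then obtain w where w: "w \<in> carrier_vec k" "vnorm w = 1" and y: "y = vnorm (M *\<^sub>v w)"
      unfolding S_def using M by auto
    have wi: "\<And>j. j < k \<Longrightarrow> \<bar>w $ j\<bar> \<le> 1" using comp_abs_le[OF w(1)] w(2) by auto
    have yi: "\<And>i. i < k \<Longrightarrow> \<bar>(M *\<^sub>v w) $ i\<bar> \<le> (\<Sum>j<k. \<bar>M $$ (i,j)\<bar>)"
    proof -
      fix i assume i: "i < k"
      have "(M *\<^sub>v w) $ i = (\<Sum>j<k. M $$ (i,j) * w $ j)"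
        using M w i by (simp add: mult_mat_vec_def scalar_prod_def lessThan_atLeast0)
      also have "\<bar>\<dots>\<bar> \<le> (\<Sum>j<k. \<bar>M $$ (i,j) * w $ j\<bar>)" by (rule sum_abs)
      also have "\<dots> \<le> (\<Sum>j<k. \<bar>M $$ (i,j)\<bar>)"
        by (rule sum_mono) (use wi in \<open>auto simp: abs_mult intro: mult_left_le\<close>)
      finally show "\<bar>(M *\<^sub>v w) $ i\<bar> \<le> (\<Sum>j<k. \<bar>M $$ (i,j)\<bar>)" .
    qed
    have "(M *\<^sub>v w) \<bullet> (M *\<^sub>v w) = (\<Sum>i<k. ((M *\<^sub>v w) $ i)^2)"
      using M by (simp add: scalar_prod_def power2_eq_square lessThan_atLeast0)
    also have "\<dots> \<le> (\<Sum>i<k. (\<Sum>j<k. \<bar>M $$ (i,j)\<bar>)^2)"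
      by (rule sum_mono) (use yi in \<open>auto intro: power2_le_iff_abs_le[THEN iffD2] simp: abs_le_iff\<close>)
    finally show "y \<le> B" unfolding y B_def vnorm_def by (rule real_sqrt_le_mono)
  qed
  have pos: "vnorm v > 0" using sp_self_pos[OF v False] unfolding vnorm_def by auto
  define v' where "v' = (1 / vnorm v) \<cdot>\<^sub>v v"
  have v': "v' \<in> carrier_vec (dim_col M)" "vnorm v' = 1" unfolding v'_def using v M pos
    by (auto simp: vnorm_smult)
  have "vnorm (M *\<^sub>v v') \<in> S" unfolding S_def using v' by blast
  hence "vnorm (M *\<^sub>v v') \<le> spec_norm M" unfolding spec_norm_def S_def[symmetric]
    using bdd by (rule cSup_upper)
  moreover have "vnorm (M *\<^sub>v v') = vnorm (M *\<^sub>v v) / vnorm v"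
    unfolding v'_def using M v pos by (simp add: mult_mat_vec vnorm_smult)
  ultimately show ?thesis using pos by (simp add: divide_le_eq)
qed

locale lmsd =
  fixes n m :: nat and \<rho> :: real and lam :: "nat \<Rightarrow> real"
    and A :: "real mat" and b :: "real vec" and x :: "nat \<Rightarrow> nat \<Rightarrow> real vec" and \<alpha> :: "nat \<Rightarrow> nat \<Rightarrow> real"
    and Q :: "nat \<Rightarrow> real mat" and R :: "nat \<Rightarrow> real mat" and \<theta> :: "nat \<Rightarrow> nat \<Rightarrow> real"
    and g :: "nat \<Rightarrow> nat \<Rightarrow> real vec"
  assumes m_pos: "m \<ge> 1"
    and rho: "\<rho> \<ge> 1"
    and lam_pos: "\<forall>i\<in>{1..n}. 0 < lam i"
    and lam_sorted: "\<forall>i j. 1 \<le> i \<longrightarrow> i \<le> j \<longrightarrow> j \<le> n \<longrightarrow> lam i \<le> lam j"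
    and A: "A \<in> carrier_mat n n" and symA: "transpose_mat A = A"
    and Apd: "\<forall>v\<in>carrier_vec n. v \<noteq> 0\<^sub>v n \<longrightarrow> v \<bullet> (A *\<^sub>v v) > 0"
    and eigA: "eigs_with_mult n A lam"
    and b: "b \<in> carrier_vec n" and x11: "x 1 1 \<in> carrier_vec n"
    and alpha1: "\<forall>j\<in>{1..m}. 0 < \<alpha> 1 j"
    and gdef: "\<forall>k\<ge>1. \<forall>j\<in>{1..m+1}. g k j = A *\<^sub>v x k j - b"
    and xstep: "\<forall>k\<ge>1. \<forall>j\<in>{1..m}. x k (j + 1) = x k j - \<alpha> k j \<cdot>\<^sub>v g k j"
    and xcyc: "\<forall>k\<ge>1. x (k + 1) 1 = x k (m + 1)"
    and QR: "\<forall>k\<ge>1. Q k \<in> carrier_mat n m \<and> R k \<in> carrier_mat m m \<and>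
         cols_mat n m (g k) = Q k * R k \<and>
         transpose_mat (Q k) * Q k = 1\<^sub>m m \<and> upper_triangular (R k)"
    and theta: "\<forall>k\<ge>1. eigs_with_mult m (transpose_mat (Q k) * A * Q k) (\<theta> k) \<and>
         (\<forall>i j. 1 \<le> i \<longrightarrow> i \<le> j \<longrightarrow> j \<le> m \<longrightarrow> \<theta> k j \<le> \<theta> k i)"
    and alpha: "\<forall>k\<ge>1. \<forall>j\<in>{1..m}. \<alpha> (k + 1) j = 1 / \<theta> k j"
    and gnz: "\<forall>k\<ge>1. \<forall>j\<in>{1..m}. g k j \<noteq> 0\<^sub>v n"
    and Ginj: "\<forall>k\<ge>1. \<forall>c\<in>carrier_vec m. cols_mat n m (g k) *\<^sub>v c = 0\<^sub>v n \<longrightarrow> c = 0\<^sub>v m"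
    and Rinv: "\<forall>k\<ge>1. \<exists>Ri. Ri \<in> carrier_mat m m \<and> R k * Ri = 1\<^sub>m m \<and> Ri * R k = 1\<^sub>m m \<and>
         spec_norm Ri \<le> \<rho> / vnorm (g k 1)"
begin

lemma xcar_row: assumes k: "k \<ge> 1" and x1: "x k 1 \<in> carrier_vec n"
  shows "1 \<le> j \<Longrightarrow> j \<le> m+1 \<Longrightarrow> x k j \<in> carrier_vec n"
proof (induct j rule: nat_induct_at_least)
  case (Suc j)
  hence j: "j \<in> {1..m}" by auto
  have "x k j \<in> carrier_vec n" using Suc by auto
  thus ?case using j k xstep gdef A b by auto
qed (use x1 in auto)

lemma xcar1: "k \<ge> 1 \<Longrightarrow> x k 1 \<in> carrier_vec n"
proof (induct k rule: nat_induct_at_least)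
  case (Suc k)
  have "x k (m+1) \<in> carrier_vec n" using xcar_row[OF Suc(1,2)] by auto
  thus ?case using xcyc Suc by auto
qed (use x11 in auto)

lemma xcar: "k \<ge> 1 \<Longrightarrow> j \<in> {1..m+1} \<Longrightarrow> x k j \<in> carrier_vec n"
  using xcar_row xcar1 by auto

lemma gcar: "k \<ge> 1 \<Longrightarrow> j \<in> {1..m+1} \<Longrightarrow> g k j \<in> carrier_vec n"
  using gdef xcar A b by auto

lemma gstep: assumes k: "k \<ge> 1" and j: "j \<in> {1..m}"
  shows "g k (j+1) = g k j - \<alpha> k j \<cdot>\<^sub>v (A *\<^sub>v g k j)"
proof -
  have x: "x k j \<in> carrier_vec n" and gj: "g k j \<in> carrier_vec n" using xcar gcar k j by auto
  have "g k (j+1) = A *\<^sub>v (x k j - \<alpha> k j \<cdot>\<^sub>v g k j) - b" using gdef xstep k j by auto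
  also have "\<dots> = g k j - \<alpha> k j \<cdot>\<^sub>v (A *\<^sub>v g k j)"
    using gdef k j x gj A b
    by (intro eq_vecI) (auto simp: mult_minus_distrib_mat_vec mult_mat_vec scalar_prod_minus_distrib)
  finally show ?thesis .
qed

lemma gcyc: "k \<ge> 1 \<Longrightarrow> g (k+1) 1 = g k (m+1)"
  using gdef xcyc by auto

definition "V = (SOME V. V \<in> carrier_mat n n \<and> transpose_mat V * V = 1\<^sub>m n \<and> diagonal_mat (transpose_mat V * A * V))"
definition "D = transpose_mat V * A * V"
definition "d i = D $$ (i,i)"
definition "z u = transpose_mat V *\<^sub>v u"

lemma cp_list: "char_poly A = (\<Prod>e\<leftarrow>map lam [1..<n+1]. [:-e,1:])"
proof -
  have "char_poly A = (\<Prod>i\<in>{1..n}. [:- lam i, 1:])" using eigA unfolding eigs_with_mult_def by auto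
  also have "\<dots> = (\<Prod>i\<in>set [1..<n+1]. [:- lam i, 1:])"
  proof -
    have "set [1..<n+1] = {1..n}" by auto
    thus ?thesis by simp
  qed
  also have "\<dots> = (\<Prod>i\<leftarrow>[1..<n+1]. [:- lam i, 1:])" by (subst prod.distinct_set_conv_list) auto
  also have "\<dots> = (\<Prod>e\<leftarrow>map lam [1..<n+1]. [:-e,1:])" by (simp add: o_def)
  finally show ?thesis .
qed

lemma V_ex: "\<exists>V. V \<in> carrier_mat n n \<and> transpose_mat V * V = 1\<^sub>m n \<and> diagonal_mat (transpose_mat V * A * V)"
  by (rule spectral_real_sym[OF A symA cp_list])

lemma V: "V \<in> carrier_mat n n" and VtV: "transpose_mat V * V = 1\<^sub>m n" and Ddiag: "diagonal_mat D"
  using someI_ex[OF V_ex] unfolding V_def[symmetric] D_def by auto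

lemma VVt: "V * transpose_mat V = 1\<^sub>m n"
  using mat_mult_left_right_inverse[OF _ V VtV] V by auto

lemma Dcar: "D \<in> carrier_mat n n" unfolding D_def using V A by auto

lemma Doff: "i < n \<Longrightarrow> j < n \<Longrightarrow> i \<noteq> j \<Longrightarrow> D $$ (i,j) = 0"
  using Ddiag Dcar unfolding diagonal_mat_def by auto

lemma zcar: "z u \<in> carrier_vec n" unfolding z_def carrier_vec_def using V by simp

lemma Dmult: assumes w: "w \<in> carrier_vec n" and i: "i < n" shows "(D *\<^sub>v w) $ i = d i * w $ i"
proof -
  have "(D *\<^sub>v w) $ i = (\<Sum>j<n. D $$ (i,j) * w $ j)"
    using Dcar w i by (simp add: mult_mat_vec_def scalar_prod_def lessThan_atLeast0)
  also have "\<dots> = (\<Sum>j<n. if j = i then D $$ (i,i) * w $ i else 0)"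
    by (rule sum.cong) (use Doff i in auto)
  also have "\<dots> = d i * w $ i" using i by (simp add: d_def)
  finally show ?thesis .
qed

lemma VzV: assumes u: "u \<in> carrier_vec n" shows "V *\<^sub>v z u = u"
proof -
  have "V *\<^sub>v z u = (V * transpose_mat V) *\<^sub>v u" unfolding z_def using V u
    by (simp add: assoc_mult_mat_vec)
  thus ?thesis using VVt u by simp
qed

lemma zA: assumes u: "u \<in> carrier_vec n" and i: "i < n" shows "z (A *\<^sub>v u) $ i = d i * z u $ i"
proof -
  have "z (A *\<^sub>v u) = transpose_mat V *\<^sub>v (A *\<^sub>v (V *\<^sub>v z u))" using VzV[OF u] unfolding z_def by simp
  also have "\<dots> = D *\<^sub>v z u" unfolding D_def using V A zcar[of u]
    by (simp add: assoc_mult_mat_vec[of _ n n _ n])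
  finally show ?thesis using Dmult[OF zcar i] by simp
qed

lemma zdot: assumes u: "u \<in> carrier_vec n" and w: "w \<in> carrier_vec n" shows "z u \<bullet> z w = u \<bullet> w"
proof -
  have "z u \<bullet> z w = u \<bullet> (V *\<^sub>v z w)" unfolding z_def
    by (rule transpose_vec_mult_scalar[OF V _ u]) (use V w in auto)
  thus ?thesis using VzV[OF w] by simp
qed

lemma znorm: assumes u: "u \<in> carrier_vec n" shows "u \<bullet> u = (\<Sum>i<n. (z u $ i)^2)"
  using zdot[OF u u] zcar[of u] by (simp add: scalar_prod_def power2_eq_square lessThan_atLeast0)

lemma zquad: assumes u: "u \<in> carrier_vec n" shows "u \<bullet> (A *\<^sub>v u) = (\<Sum>i<n. d i * (z u $ i)^2)"
proof -
  have "u \<bullet> (A *\<^sub>v u) = z u \<bullet> z (A *\<^sub>v u)" using zdot[of u "A *\<^sub>v u"] u A by auto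
  also have "\<dots> = (\<Sum>i<n. z u $ i * (d i * z u $ i))"
    using zcar[of u] zcar[of "A *\<^sub>v u"] zA[OF u] by (simp add: scalar_prod_def lessThan_atLeast0)
  finally show ?thesis by (simp add: power2_eq_square mult.commute mult.left_commute)
qed

lemma zlin: assumes u: "u \<in> carrier_vec n" and w: "w \<in> carrier_vec n" and i: "i < n"
  shows "z (u - c \<cdot>\<^sub>v w) $ i = z u $ i - c * z w $ i"
  unfolding z_def using V u w i by (simp add: mult_minus_distrib_mat_vec mult_mat_vec)

lemma d_lam: assumes i: "i < n" shows "\<exists>j\<in>{1..n}. d i = lam j"
proof -
  have eqA: "A = V * D * transpose_mat V"
  proof -
    have "V * D * transpose_mat V = (V * transpose_mat V) * A * (V * transpose_mat V)"
      unfolding D_def using V A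
      by (simp add: assoc_mult_mat[of _ n n _ n _ n])
    thus ?thesis using VVt A by simp
  qed
  have "similar_mat_wit A D V (transpose_mat V)" unfolding similar_mat_wit_def Let_def
    using V A Dcar VVt VtV eqA by auto
  hence sim: "similar_mat A D" unfolding similar_mat_def by blast
  have ev: "eigenvalue D (d i)" unfolding eigenvalue_def eigenvector_def
  proof (intro exI[of _ "unit_vec n i"] conjI)
    show "D *\<^sub>v unit_vec n i = d i \<cdot>\<^sub>v unit_vec n i"
    proof (rule eq_vecI)
      fix k assume "k < dim_vec (d i \<cdot>\<^sub>v unit_vec n i)"
      hence k: "k < n" by auto
      show "(D *\<^sub>v unit_vec n i) $ k = (d i \<cdot>\<^sub>v unit_vec n i) $ k"
        using Dmult[OF _ k, of "unit_vec n i"] i k by (auto simp: unit_vec_def)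
    qed (use Dcar in auto)
  qed (use Dcar i in auto)
  have "poly (char_poly A) (d i) = 0"
    using ev eigenvalue_root_char_poly[OF Dcar] char_poly_similar[OF sim] by auto
  hence "(\<Prod>j\<in>{1..n}. poly [:- lam j, 1:] (d i)) = 0"
    using eigA unfolding eigs_with_mult_def by (auto simp: poly_prod)
  thus ?thesis by auto
qed

lemma lam_pos': "j \<in> {1..n} \<Longrightarrow> 0 < lam j" using lam_pos by auto

lemma d_bounds: assumes i: "i < n" shows "lam 1 \<le> d i" "d i \<le> lam n" "0 < d i"
proof -
  obtain j where j: "j \<in> {1..n}" "d i = lam j" using d_lam[OF i] by auto
  show "lam 1 \<le> d i" "d i \<le> lam n" using j lam_sorted by auto
  show "0 < d i" using j lam_pos by auto
qed

end


context lmsd begin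

definition "zc k j i = z (g k j) $ i"

lemma zc_step: assumes k: "k \<ge> 1" and j: "j \<in> {1..m}" and i: "i < n"
  shows "zc k (j+1) i = (1 - \<alpha> k j * d i) * zc k j i"
proof -
  have gj: "g k j \<in> carrier_vec n" using gcar k j by auto
  have "zc k (j+1) i = z (g k j - \<alpha> k j \<cdot>\<^sub>v (A *\<^sub>v g k j)) $ i" unfolding zc_def gstep[OF k j] ..
  also have "\<dots> = z (g k j) $ i - \<alpha> k j * z (A *\<^sub>v g k j) $ i"
    by (rule zlin) (use gj A i in auto)
  also have "\<dots> = (1 - \<alpha> k j * d i) * zc k j i" unfolding zc_def zA[OF gj i] by (simp add: algebra_simps)
  finally show ?thesis .
qed

lemma zc_prod: assumes k: "k \<ge> 1" and i: "i < n"
  shows "1 \<le> j \<Longrightarrow> j \<le> m+1 \<Longrightarrow> zc k j i = (\<Prod>l\<in>{1..<j}. (1 - \<alpha> k l * d i)) * zc k 1 i"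
proof (induct j rule: nat_induct_at_least)
  case (Suc j)
  have "zc k (Suc j) i = (1 - \<alpha> k j * d i) * zc k j i" using zc_step[OF k _ i, of j] Suc by auto
  also have "\<dots> = (\<Prod>l\<in>{1..<Suc j}. (1 - \<alpha> k l * d i)) * zc k 1 i"
    using Suc by (simp add: prod.atLeastLessThan_Suc)
  finally show ?case .
qed auto

lemma zc_cycle: assumes k: "k \<ge> 1" and i: "i < n"
  shows "zc (k+1) 1 i = (\<Prod>l\<in>{1..m}. (1 - \<alpha> k l * d i)) * zc k 1 i"
proof -
  have "zc (k+1) 1 i = zc k (m+1) i" unfolding zc_def using gcyc k by auto
  also have "\<dots> = (\<Prod>l\<in>{1..<m+1}. (1 - \<alpha> k l * d i)) * zc k 1 i" using zc_prod[OF k i, of "m+1"] by auto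
  also have "{1..<m+1} = {1..m}" by auto
  finally show ?thesis .
qed

lemma gnorm: "k \<ge> 1 \<Longrightarrow> j \<in> {1..m+1} \<Longrightarrow> g k j \<bullet> g k j = (\<Sum>i<n. (zc k j i)^2)"
  unfolding zc_def using znorm gcar by auto

lemma zc_le: assumes "k \<ge> 1" "j \<in> {1..m+1}" "i < n" shows "(zc k j i)^2 \<le> g k j \<bullet> g k j"
  unfolding gnorm[OF assms(1,2)] by (rule member_le_sum) (use assms in auto)

lemma ritz: assumes k: "k \<ge> 1" and j: "j \<in> {1..m}"
  shows "\<exists>c u. c \<in> carrier_vec m \<and> u = cols_mat n m (g k) *\<^sub>v c \<and> u \<in> carrier_vec n \<and> u \<bullet> u > 0 \<and>
     \<theta> k j * (u \<bullet> u) = u \<bullet> (A *\<^sub>v u) \<and> (c \<bullet> c) * (g k 1 \<bullet> g k 1) \<le> \<rho>^2 * (u \<bullet> u)"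
proof -
  have Q: "Q k \<in> carrier_mat n m" and Rk: "R k \<in> carrier_mat m m" and GQR: "cols_mat n m (g k) = Q k * R k"
    and QtQ: "transpose_mat (Q k) * Q k = 1\<^sub>m m" using QR k by auto
  define T where "T = transpose_mat (Q k) * A * Q k"
  have T: "T \<in> carrier_mat m m" unfolding T_def using Q A by auto
  have cpT: "char_poly T = (\<Prod>i\<in>{1..m}. [:- \<theta> k i, 1:])" using theta k unfolding T_def eigs_with_mult_def by auto
  have "poly (char_poly T) (\<theta> k j) = 0" unfolding cpT poly_prod using j
    by (intro prod_zero) auto
  hence "eigenvalue T (\<theta> k j)" using eigenvalue_root_char_poly[OF T] by auto
  then obtain w where w: "w \<in> carrier_vec m" "w \<noteq> 0\<^sub>v m" and Tw: "T *\<^sub>v w = \<theta> k j \<cdot>\<^sub>v w"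
    unfolding eigenvalue_def eigenvector_def using T by auto
  define u where "u = Q k *\<^sub>v w"
  have u: "u \<in> carrier_vec n" unfolding u_def using Q w by auto
  have QtQw: "transpose_mat (Q k) *\<^sub>v u = w" unfolding u_def using Q w QtQ
    by (simp add: assoc_mult_mat_vec[symmetric, of _ m n _ m])
  have uu: "u \<bullet> u = w \<bullet> w"
    using transpose_vec_mult_scalar[OF Q w(1) u] QtQw unfolding u_def by simp
  have Au: "A *\<^sub>v u \<in> carrier_vec n" using A u by auto
  have "T *\<^sub>v w = (transpose_mat (Q k) * A) *\<^sub>v (Q k *\<^sub>v w)" unfolding T_def
    by (rule assoc_mult_mat_vec) (use Q A w in auto)
  also have "\<dots> = transpose_mat (Q k) *\<^sub>v (A *\<^sub>v u)" unfolding u_def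
    by (rule assoc_mult_mat_vec) (use Q A w in auto)
  finally have "T *\<^sub>v w = transpose_mat (Q k) *\<^sub>v (A *\<^sub>v u)" .
  hence "(T *\<^sub>v w) \<bullet> w = (A *\<^sub>v u) \<bullet> u"
    using transpose_vec_mult_scalar[OF Q w(1) Au] unfolding u_def by simp
  also have "\<dots> = u \<bullet> (A *\<^sub>v u)" by (rule comm_scalar_prod[OF Au u])
  finally have th: "\<theta> k j * (u \<bullet> u) = u \<bullet> (A *\<^sub>v u)" unfolding Tw uu using w by simp
  have upos: "u \<bullet> u > 0" unfolding uu by (rule sp_self_pos[OF w(1,2)])
  obtain Ri where Ri: "Ri \<in> carrier_mat m m" "R k * Ri = 1\<^sub>m m" and sn: "spec_norm Ri \<le> \<rho> / vnorm (g k 1)"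
    using Rinv k by blast
  define c where "c = Ri *\<^sub>v w"
  have c: "c \<in> carrier_vec m" unfolding c_def using Ri w by auto
  have Gc: "cols_mat n m (g k) *\<^sub>v c = u" unfolding GQR c_def u_def using Q Rk Ri w
    by (simp add: assoc_mult_mat_vec[of _ n m _ m] assoc_mult_mat_vec[symmetric, of _ m m _ m])
  have g1: "g k 1 \<in> carrier_vec n" using gcar k by auto
  have gpos: "vnorm (g k 1) > 0" using sp_self_pos[OF g1] gnz k m_pos unfolding vnorm_def by auto
  have "vnorm c \<le> spec_norm Ri * vnorm w" unfolding c_def by (rule spec_norm_bound[OF Ri(1) w(1)])
  also have "\<dots> \<le> \<rho> / vnorm (g k 1) * vnorm w" by (rule mult_right_mono[OF sn vnorm_nonneg])
  finally have "vnorm c * vnorm (g k 1) \<le> \<rho> * vnorm w" using gpos by (simp add: field_simps)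
  hence "(vnorm c * vnorm (g k 1))^2 \<le> (\<rho> * vnorm w)^2"
    by (intro power_mono) (auto simp: vnorm_nonneg)
  hence "(c \<bullet> c) * (g k 1 \<bullet> g k 1) \<le> \<rho>^2 * (w \<bullet> w)"
    unfolding vnorm_def power_mult_distrib using sp_self_nonneg by simp
  thus ?thesis using c Gc u upos th uu by auto
qed

lemma L_pos: "n \<ge> 1 \<Longrightarrow> 0 < lam 1" using lam_pos by auto

lemma sum_d_bounds: assumes u: "u \<in> carrier_vec n"
  shows "lam 1 * (u \<bullet> u) \<le> u \<bullet> (A *\<^sub>v u)" "u \<bullet> (A *\<^sub>v u) \<le> lam n * (u \<bullet> u)"
proof -
  show "lam 1 * (u \<bullet> u) \<le> u \<bullet> (A *\<^sub>v u)" unfolding znorm[OF u] zquad[OF u] sum_distrib_left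
    by (rule sum_mono) (use d_bounds in \<open>auto intro: mult_right_mono\<close>)
  show "u \<bullet> (A *\<^sub>v u) \<le> lam n * (u \<bullet> u)" unfolding znorm[OF u] zquad[OF u] sum_distrib_left
    by (rule sum_mono) (use d_bounds in \<open>auto intro: mult_right_mono\<close>)
qed

lemma theta_bounds: assumes k: "k \<ge> 1" and j: "j \<in> {1..m}"
  shows "lam 1 \<le> \<theta> k j" "\<theta> k j \<le> lam n"
proof -
  obtain c u where u: "u \<in> carrier_vec n" "u \<bullet> u > 0" and th: "\<theta> k j * (u \<bullet> u) = u \<bullet> (A *\<^sub>v u)"
    using ritz[OF k j] by blast
  have "lam 1 * (u \<bullet> u) \<le> \<theta> k j * (u \<bullet> u)" using sum_d_bounds(1)[OF u(1)] th by simp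
  thus "lam 1 \<le> \<theta> k j" using u(2) by (rule mult_right_le_imp_le)
  have "\<theta> k j * (u \<bullet> u) \<le> lam n * (u \<bullet> u)" using sum_d_bounds(2)[OF u(1)] th by simp
  thus "\<theta> k j \<le> lam n" using u(2) by (rule mult_right_le_imp_le)
qed

definition "Del = lam n / lam 1 + 1 + (\<Sum>j\<in>{1..m}. \<alpha> 1 j) * lam n"

lemma alpha1_nn: "(\<Sum>j\<in>{1..m}. \<alpha> 1 j) \<ge> 0"
proof -
  have "\<And>j. j \<in> {1..m} \<Longrightarrow> 0 \<le> \<alpha> 1 j" using alpha1 by (simp add: less_imp_le)
  thus ?thesis by (intro sum_nonneg) auto
qed

lemma n_pos: "n \<ge> 1"
proof (rule ccontr)
  assume "\<not> n \<ge> 1" hence "n = 0" by auto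
  moreover have "g 1 1 \<in> carrier_vec n" using gcar by auto
  ultimately have "g 1 1 = 0\<^sub>v n" by auto
  thus False using gnz m_pos by auto
qed

lemma LU: "0 < lam 1" "lam 1 \<le> lam n" "0 < lam n"
  using lam_pos lam_sorted n_pos by auto

lemma Del_ge1: "Del \<ge> 1"
proof -
  have "(\<Sum>j\<in>{1..m}. \<alpha> 1 j) \<ge> 0" by (rule alpha1_nn)
  thus ?thesis unfolding Del_def using LU by auto
qed

lemma fac_bound: assumes k: "k \<ge> 1" and j: "j \<in> {1..m}" and i: "i < n"
  shows "\<bar>1 - \<alpha> k j * d i\<bar> \<le> Del"
proof -
  have di: "0 < d i" "d i \<le> lam n" using d_bounds[OF i] by auto
  have sa: "(\<Sum>j\<in>{1..m}. \<alpha> 1 j) \<ge> 0" by (rule alpha1_nn)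
  have q: "lam n / lam 1 \<ge> 0" using LU by auto
  have su: "(\<Sum>j\<in>{1..m}. \<alpha> 1 j) * lam n \<ge> 0" using sa LU by simp
  show ?thesis
  proof (cases "k = 1")
    case True
    have a: "0 < \<alpha> 1 j" using alpha1 j by auto
    have "\<alpha> 1 j \<le> (\<Sum>j\<in>{1..m}. \<alpha> 1 j)" by (rule member_le_sum) (use j alpha1 in \<open>auto simp: less_imp_le\<close>)
    hence "\<alpha> 1 j * d i \<le> (\<Sum>j\<in>{1..m}. \<alpha> 1 j) * lam n"
      using di a by (intro mult_mono) auto
    moreover have "\<alpha> 1 j * d i > 0" using a di by simp
    ultimately show ?thesis using True q su unfolding Del_def by (simp add: abs_if)
  next
    case False
    define k' where "k' = k - 1"
    have k': "k = k' + 1" "k' \<ge> 1" using k False unfolding k'_def by auto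
    have al: "\<alpha> k j = 1 / \<theta> k' j" using alpha k' j by auto
    have th: "lam 1 \<le> \<theta> k' j" using theta_bounds[OF k'(2) j] by auto
    have "\<alpha> k j * d i = d i / \<theta> k' j" unfolding al by simp
    also have "\<dots> \<le> lam n / lam 1" by (rule frac_le) (use di th LU in auto)
    finally have "\<alpha> k j * d i \<le> lam n / lam 1" .
    moreover have "\<alpha> k j * d i > 0" unfolding al using th di LU by auto
    ultimately show ?thesis using su q unfolding Del_def by (auto simp: abs_if)
  qed
qed

lemma zc_growth: assumes k: "k \<ge> 1" and j: "j \<in> {1..m+1}" and i: "i < n"
  shows "\<bar>zc k j i\<bar> \<le> Del^m * \<bar>zc k 1 i\<bar>"
proof -
  have "\<bar>zc k j i\<bar> = (\<Prod>l\<in>{1..<j}. \<bar>1 - \<alpha> k l * d i\<bar>) * \<bar>zc k 1 i\<bar>"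
    using zc_prod[OF k i, of j] j by (simp add: abs_mult abs_prod)
  also have "(\<Prod>l\<in>{1..<j}. \<bar>1 - \<alpha> k l * d i\<bar>) \<le> (\<Prod>l\<in>{1..<j}. Del)"
    by (rule prod_mono) (use fac_bound[OF k _ i] j in auto)
  also have "\<dots> = Del ^ (j - 1)" by simp
  also have "\<dots> \<le> Del ^ m" using j Del_ge1 by (intro power_increasing) auto
  finally show ?thesis by (simp add: mult_right_mono)
qed

lemma cycle_growth: assumes k: "k \<ge> 1" and i: "i < n"
  shows "\<bar>zc (k+1) 1 i\<bar> \<le> Del^m * \<bar>zc k 1 i\<bar>"
  using zc_growth[OF k _ i, of "m+1"] zc_prod[OF k i, of "m+1"] unfolding zc_def gcyc[OF k] by auto

lemma zGc: assumes k: "k \<ge> 1" and c: "c \<in> carrier_vec m" and i: "i < n"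
  shows "z (cols_mat n m (g k) *\<^sub>v c) $ i = (\<Sum>l<m. c $ l * zc k (l+1) i)"
proof -
  define G where "G = cols_mat n m (g k)"
  have G: "G \<in> carrier_mat n m" unfolding G_def cols_mat_def by auto
  have colG: "\<And>l. l < m \<Longrightarrow> col G l = g k (l+1)"
  proof -
    fix l assume l: "l < m"
    have gl: "g k (l+1) \<in> carrier_vec n" using gcar k l by auto
    show "col G l = g k (l+1)" unfolding G_def cols_mat_def
      by (rule eq_vecI) (use l gl in auto)
  qed
  have "z (G *\<^sub>v c) = (transpose_mat V * G) *\<^sub>v c" unfolding z_def
    by (rule assoc_mult_mat_vec[symmetric]) (use V G c in auto)
  also have "\<dots> $ i = (\<Sum>l<m. (transpose_mat V * G) $$ (i,l) * c $ l)"
    using V G c i by (simp add: mult_mat_vec_def scalar_prod_def lessThan_atLeast0)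
  also have "\<dots> = (\<Sum>l<m. c $ l * zc k (l+1) i)"
  proof (rule sum.cong)
    fix l assume "l \<in> {..<m}" hence l: "l < m" by auto
    have gl: "g k (l+1) \<in> carrier_vec n" using gcar k l by auto
    have "(transpose_mat V * G) $$ (i,l) = row (transpose_mat V) i \<bullet> col G l"
      using V G i l by simp
    also have "\<dots> = zc k (l+1) i" unfolding zc_def z_def colG[OF l] using V gl i by simp
    finally show "(transpose_mat V * G) $$ (i,l) * c $ l = c $ l * zc k (l+1) i" by simp
  qed simp
  finally show ?thesis unfolding G_def .
qed

lemma theta_lower: assumes k: "k \<ge> 1" and mu: "0 < \<mu>" and j: "j \<in> {1..m}"
  and hS: "4 * (real m^2 * Del^(2*m) * \<rho>^2) * (\<Sum>i\<in>{i\<in>{..<n}. d i < \<mu>}. (zc k 1 i)^2) \<le> g k 1 \<bullet> g k 1"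
  shows "3/4 * \<mu> \<le> \<theta> k j"
proof -
  obtain c u where c: "c \<in> carrier_vec m" and uG: "u = cols_mat n m (g k) *\<^sub>v c" and u: "u \<in> carrier_vec n"
    and upos: "u \<bullet> u > 0" and th: "\<theta> k j * (u \<bullet> u) = u \<bullet> (A *\<^sub>v u)"
    and cg: "(c \<bullet> c) * (g k 1 \<bullet> g k 1) \<le> \<rho>^2 * (u \<bullet> u)"
    using ritz[OF k j] by blast
  define low where "low = {i\<in>{..<n}. d i < \<mu>}"
  define S where "S = (\<Sum>i\<in>low. (zc k 1 i)^2)"
  define Lo where "Lo = (\<Sum>i\<in>low. (z u $ i)^2)"
  define sc where "sc = vnorm c"
  have sc0: "sc \<ge> 0" unfolding sc_def by (rule vnorm_nonneg)
  have sc2: "sc^2 = c \<bullet> c" unfolding sc_def vnorm_def using sp_self_nonneg by simp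
  have cl: "\<And>l. l < m \<Longrightarrow> \<bar>c $ l\<bar> \<le> sc" unfolding sc_def using comp_abs_le[OF c] by auto
  have D0: "Del ^ m \<ge> 0" using Del_ge1 by simp
  have zi: "\<And>i. i < n \<Longrightarrow> (z u $ i)^2 \<le> real m^2 * (c \<bullet> c) * Del^(2*m) * (zc k 1 i)^2"
  proof -
    fix i assume i: "i < n"
    have "\<bar>z u $ i\<bar> = \<bar>\<Sum>l<m. c $ l * zc k (l+1) i\<bar>" unfolding uG zGc[OF k c i] ..
    also have "\<dots> \<le> (\<Sum>l<m. \<bar>c $ l\<bar> * \<bar>zc k (l+1) i\<bar>)" using sum_abs[of "\<lambda>l. c $ l * zc k (l+1) i" "{..<m}"] by (simp add: abs_mult)
    also have "\<dots> \<le> (\<Sum>l<m. sc * (Del^m * \<bar>zc k 1 i\<bar>))"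
    proof (rule sum_mono)
      fix l assume "l \<in> {..<m}" hence l: "l < m" by auto
      show "\<bar>c $ l\<bar> * \<bar>zc k (l+1) i\<bar> \<le> sc * (Del^m * \<bar>zc k 1 i\<bar>)"
        by (rule mult_mono) (use cl[OF l] zc_growth[OF k _ i, of "l+1"] l sc0 in auto)
    qed
    also have "\<dots> = real m * sc * Del^m * \<bar>zc k 1 i\<bar>" by simp
    finally have "\<bar>z u $ i\<bar> \<le> real m * sc * Del^m * \<bar>zc k 1 i\<bar>" .
    hence "\<bar>z u $ i\<bar>^2 \<le> (real m * sc * Del^m * \<bar>zc k 1 i\<bar>)^2"
      by (intro power_mono) auto
    thus "(z u $ i)^2 \<le> real m^2 * (c \<bullet> c) * Del^(2*m) * (zc k 1 i)^2"
      unfolding sc2[symmetric] by (simp add: power_mult_distrib power_mult[symmetric] mult.commute)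
  qed
  have "Lo \<le> (\<Sum>i\<in>low. real m^2 * (c \<bullet> c) * Del^(2*m) * (zc k 1 i)^2)"
    unfolding Lo_def by (rule sum_mono) (use zi in \<open>auto simp: low_def\<close>)
  also have "\<dots> = real m^2 * (c \<bullet> c) * Del^(2*m) * S" unfolding S_def by (simp add: sum_distrib_left)
  finally have Lo1: "Lo \<le> real m^2 * (c \<bullet> c) * Del^(2*m) * S" .
  have g1: "g k 1 \<in> carrier_vec n" using gcar k by auto
  have ggpos: "g k 1 \<bullet> g k 1 > 0" using sp_self_pos[OF g1] gnz k m_pos by auto
  have S0: "S \<ge> 0" unfolding S_def by (intro sum_nonneg) auto
  have K0: "real m^2 * Del^(2*m) * S \<ge> 0" using S0 Del_ge1 by simp
  have "Lo * (g k 1 \<bullet> g k 1) \<le> real m^2 * Del^(2*m) * S * ((c \<bullet> c) * (g k 1 \<bullet> g k 1))"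
    using mult_right_mono[OF Lo1 less_imp_le[OF ggpos]] by (simp add: mult_ac)
  also have "\<dots> \<le> real m^2 * Del^(2*m) * S * (\<rho>^2 * (u \<bullet> u))"
    by (rule mult_left_mono[OF cg K0])
  also have "\<dots> = (real m^2 * Del^(2*m) * \<rho>^2 * S) * (u \<bullet> u)" by (simp add: mult_ac)
  also have "\<dots> \<le> (g k 1 \<bullet> g k 1) / 4 * (u \<bullet> u)"
    using hS upos unfolding S_def low_def by (intro mult_right_mono) auto
  finally have "Lo * (g k 1 \<bullet> g k 1) \<le> (u \<bullet> u) / 4 * (g k 1 \<bullet> g k 1)" by (simp add: mult_ac)
  hence Lo2: "Lo \<le> (u \<bullet> u) / 4" using ggpos by (rule mult_right_le_imp_le)
  have Lo_eq: "Lo = (\<Sum>i<n. if d i < \<mu> then (z u $ i)^2 else 0)"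
    unfolding Lo_def low_def by (rule sum.inter_filter) auto
  have "u \<bullet> (A *\<^sub>v u) = (\<Sum>i<n. d i * (z u $ i)^2)" by (rule zquad[OF u])
  also have "\<dots> \<ge> (\<Sum>i<n. \<mu> * (z u $ i)^2 - \<mu> * (if d i < \<mu> then (z u $ i)^2 else 0))"
  proof (rule sum_mono)
    fix i assume "i \<in> {..<n}" hence i: "i < n" by auto
    show "\<mu> * (z u $ i)^2 - \<mu> * (if d i < \<mu> then (z u $ i)^2 else 0) \<le> d i * (z u $ i)^2"
      using d_bounds(3)[OF i] mu by (auto intro: mult_right_mono)
  qed
  also have "(\<Sum>i<n. \<mu> * (z u $ i)^2 - \<mu> * (if d i < \<mu> then (z u $ i)^2 else 0)) = \<mu> * (u \<bullet> u) - \<mu> * Lo"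
    unfolding Lo_eq znorm[OF u] by (simp add: sum_subtractf sum_distrib_left)
  finally have "\<theta> k j * (u \<bullet> u) \<ge> \<mu> * (u \<bullet> u) - \<mu> * Lo" using th by simp
  moreover have "\<mu> * Lo \<le> \<mu> * ((u \<bullet> u) / 4)" using Lo2 mu by (intro mult_left_mono) auto
  ultimately have "3/4 * \<mu> * (u \<bullet> u) \<le> \<theta> k j * (u \<bullet> u)" by (simp add: field_simps)
  thus ?thesis using upos by (rule mult_right_le_imp_le)
qed

end


lemma geo_rec:
  fixes a :: "nat \<Rightarrow> real"
  assumes s: "0 < s" and rec: "\<And>k. k \<ge> 1 \<Longrightarrow> a (k+2) \<le> max (s * a (k+1)) (M * s^k)"
  shows "\<exists>C. \<forall>k\<ge>1. a k \<le> C * s^k"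
proof -
  define D where "D = max (a 2 / s^2) (M / s^2)"
  have main: "a (k+2) \<le> D * s^(k+2)" for k
  proof (induct k)
    case 0
    have "a 2 = (a 2 / s^2) * s^2" using s by simp
    also have "\<dots> \<le> D * s^2" unfolding D_def using s by (intro mult_right_mono) auto
    finally show ?case by (simp add: numeral_2_eq_2 power2_eq_square)
  next
    case (Suc k)
    have r: "a (Suc k + 2) \<le> max (s * a (Suc k + 1)) (M * s^(Suc k))" using rec[of "Suc k"] by simp
    have 1: "s * a (Suc k + 1) \<le> D * s^(Suc k + 2)"
      using mult_left_mono[OF Suc[simplified] less_imp_le[OF s]] by (simp add: mult_ac)
    have "M * s^(Suc k) = (M / s^2) * s^(Suc k + 2)" using s by (simp add: field_simps power_add power2_eq_square)
    also have "\<dots> \<le> D * s^(Suc k + 2)" unfolding D_def using s by (intro mult_right_mono) auto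
    finally show ?case using r 1 by simp
  qed
  define C where "C = max D (a 1 / s)"
  show ?thesis
  proof (intro exI[of _ C] allI impI)
    fix k :: nat assume k: "k \<ge> 1"
    show "a k \<le> C * s^k"
    proof (cases "k = 1")
      case True
      have "a 1 = (a 1 / s) * s" using s by simp
      also have "\<dots> \<le> C * s" unfolding C_def using s by (intro mult_right_mono) auto
      finally show ?thesis using True by simp
    next
      case False
      then obtain k' where k': "k = k' + 2" using k by (metis add.commute le_add_diff_inverse le_neq_implies_less less_iff_succ_less_eq one_add_one plus_1_eq_Suc)
      have "a k \<le> D * s^k" using main[of k'] k' by simp
      also have "\<dots> \<le> C * s^k" unfolding C_def using s by (intro mult_right_mono) auto
      finally show ?thesis .
    qed
  qed
qed

lemma fin_unif:
  fixes f :: "'i \<Rightarrow> nat \<Rightarrow> real"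
  assumes fin: "finite I" and s: "s \<ge> 0" and h: "\<forall>i\<in>I. \<exists>C. \<forall>k\<ge>1. f i k \<le> C * s^k"
  shows "\<exists>C. \<forall>i\<in>I. \<forall>k\<ge>1. f i k \<le> C * s^k"
  using fin h
proof (induct I rule: finite_induct)
  case empty thus ?case by auto
next
  case (insert x F)
  obtain C1 where C1: "\<forall>k\<ge>1. f x k \<le> C1 * s^k" using insert by auto
  obtain C2 where C2: "\<forall>i\<in>F. \<forall>k\<ge>1. f i k \<le> C2 * s^k" using insert by auto
  have sk: "\<And>k. s^k \<ge> 0" using s by simp
  show ?case
  proof (intro exI[of _ "max C1 C2"] ballI allI impI)
    fix i k assume i: "i \<in> insert x F" and k: "(k::nat) \<ge> 1"
    have "C1 * s^k \<le> max C1 C2 * s^k" "C2 * s^k \<le> max C1 C2 * s^k"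
      using sk by (auto intro: mult_right_mono)
    thus "f i k \<le> max C1 C2 * s^k" using C1 C2 i k by force
  qed
qed

context lmsd begin

definition "qq = max (1/3) (1 - lam 1 / lam n)"
definition "c2 = max (1/2) (qq ^ m)"

lemma qq: "0 \<le> qq" "qq < 1"
  unfolding qq_def using LU by (auto simp: field_simps)

lemma c2: "0 < c2" "c2 < 1" "qq ^ m \<le> c2"
proof -
  have "qq ^ m < 1" using qq m_pos by (simp add: power_less_one_iff)
  thus "0 < c2" "c2 < 1" "qq ^ m \<le> c2" unfolding c2_def by auto
qed

lemma contract: assumes k: "k \<ge> 1" and i: "i < n"
  and hS: "4 * (real m^2 * Del^(2*m) * \<rho>^2) * (\<Sum>i'\<in>{i'\<in>{..<n}. d i' < d i}. (zc k 1 i')^2) \<le> g k 1 \<bullet> g k 1"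
  shows "\<bar>zc (k+2) 1 i\<bar> \<le> c2 * \<bar>zc (k+1) 1 i\<bar>"
proof -
  have di: "lam 1 \<le> d i" "d i \<le> lam n" "0 < d i" using d_bounds[OF i] by auto
  have fac: "\<bar>1 - \<alpha> (k+1) l * d i\<bar> \<le> qq" if l: "l \<in> {1..m}" for l
  proof -
    have al: "\<alpha> (k+1) l = 1 / \<theta> k l" using alpha k l by auto
    have th1: "3/4 * d i \<le> \<theta> k l" by (rule theta_lower[OF k di(3) l hS])
    have th2: "\<theta> k l \<le> lam n" using theta_bounds[OF k l] by auto
    have thp: "\<theta> k l > 0" using th1 di by auto
    have e: "\<alpha> (k+1) l * d i = d i / \<theta> k l" unfolding al by simp
    have up: "d i / \<theta> k l \<le> 4/3" using th1 thp by (simp add: divide_le_eq)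
    have lo: "lam 1 / lam n \<le> d i / \<theta> k l" by (rule frac_le) (use di th2 thp LU in auto)
    define r where "r = d i / \<theta> k l"
    define t where "t = lam 1 / lam n"
    have "r \<le> 4/3" "t \<le> r" using up lo unfolding r_def t_def by auto
    hence "\<bar>1 - r\<bar> \<le> max (1/3) (1 - t)" by (auto simp: abs_if max_def)
    thus ?thesis unfolding e qq_def r_def t_def .
  qed
  have "\<bar>zc (k+2) 1 i\<bar> = (\<Prod>l\<in>{1..m}. \<bar>1 - \<alpha> (k+1) l * d i\<bar>) * \<bar>zc (k+1) 1 i\<bar>"
    using zc_cycle[of "k+1" i] i by (simp add: abs_mult abs_prod)
  also have "(\<Prod>l\<in>{1..m}. \<bar>1 - \<alpha> (k+1) l * d i\<bar>) \<le> (\<Prod>l\<in>{1..m}. qq)"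
    by (rule prod_mono) (use fac in auto)
  also have "\<dots> = qq ^ m" by simp
  also have "\<dots> \<le> c2" by (rule c2(3))
  finally show ?thesis by (simp add: mult_right_mono)
qed

definition "KK = real m^2 * Del^(2*m) * \<rho>^2"

lemma KK0: "KK \<ge> 0" unfolding KK_def using Del_ge1 by simp

lemma induct_step: assumes p: "p + 1 \<le> n" and C0: "C \<ge> 0"
  and hC: "\<forall>k\<ge>1. \<forall>i<n. (\<exists>j\<in>{1..p}. d i = lam j) \<longrightarrow> \<bar>zc k 1 i\<bar> \<le> C * c2^k"
  and i: "i < n" and di: "d i = lam (p+1)"
  shows "\<exists>Ci. \<forall>k\<ge>1. \<bar>zc k 1 i\<bar> \<le> Ci * c2^k"
proof -
  have lowb: "\<bar>zc k 1 i'\<bar> \<le> C * c2^k" if k: "k \<ge> 1" and i': "i' \<in> {i'\<in>{..<n}. d i' < d i}" for k i'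
  proof -
    have i'n: "i' < n" and lt: "d i' < lam (p+1)" using i' di by auto
    obtain j' where j': "j' \<in> {1..n}" "d i' = lam j'" using d_lam[OF i'n] by auto
    have "j' \<le> p"
    proof (rule ccontr)
      assume "\<not> j' \<le> p"
      hence "lam (p+1) \<le> lam j'" using lam_sorted j' by auto
      thus False using lt j' by auto
    qed
    hence "\<exists>j\<in>{1..p}. d i' = lam j" using j' by auto
    thus ?thesis using hC k i'n by auto
  qed
  have Sb: "(\<Sum>i'\<in>{i'\<in>{..<n}. d i' < d i}. (zc k 1 i')^2) \<le> real n * (C * c2^k)^2" if k: "k \<ge> 1" for k
  proof -
    have "(\<Sum>i'\<in>{i'\<in>{..<n}. d i' < d i}. (zc k 1 i')^2) \<le> (\<Sum>i'\<in>{i'\<in>{..<n}. d i' < d i}. (C * c2^k)^2)"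
    proof (rule sum_mono)
      fix i' assume "i' \<in> {i'\<in>{..<n}. d i' < d i}"
      hence "\<bar>zc k 1 i'\<bar> \<le> C * c2^k" using lowb k by auto
      hence "\<bar>zc k 1 i'\<bar>^2 \<le> (C * c2^k)^2" by (intro power_mono) auto
      thus "(zc k 1 i')^2 \<le> (C * c2^k)^2" by simp
    qed
    also have "\<dots> = real (card {i'\<in>{..<n}. d i' < d i}) * (C * c2^k)^2" by simp
    also have "\<dots> \<le> real n * (C * c2^k)^2"
    proof (rule mult_right_mono)
      have "card {i'\<in>{..<n}. d i' < d i} \<le> card {..<n}" by (rule card_mono) auto
      thus "real (card {i'\<in>{..<n}. d i' < d i}) \<le> real n" by simp
    qed simp
    finally show ?thesis .
  qed
  define a where "a k = \<bar>zc k 1 i\<bar>" for k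
  define M where "M = Del^(2*m) * sqrt (4 * KK * real n) * C"
  have D0: "Del^m \<ge> 0" using Del_ge1 by simp
  have rec: "a (k+2) \<le> max (c2 * a (k+1)) (M * c2^k)" if k: "k \<ge> 1" for k
  proof (cases "4 * KK * (\<Sum>i'\<in>{i'\<in>{..<n}. d i' < d i}. (zc k 1 i')^2) \<le> g k 1 \<bullet> g k 1")
    case True
    have "a (k+2) \<le> c2 * a (k+1)" unfolding a_def by (rule contract[OF k i]) (use True in \<open>simp add: KK_def\<close>)
    thus ?thesis by simp
  next
    case False
    have "(a k)^2 \<le> g k 1 \<bullet> g k 1" unfolding a_def using zc_le[OF k _ i, of 1] by simp
    also have "\<dots> \<le> 4 * KK * (\<Sum>i'\<in>{i'\<in>{..<n}. d i' < d i}. (zc k 1 i')^2)" using False by simp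
    also have "\<dots> \<le> 4 * KK * (real n * (C * c2^k)^2)" using Sb[OF k] KK0 by (intro mult_left_mono) auto
    also have "\<dots> = (sqrt (4 * KK * real n) * C * c2^k)^2"
      using KK0 by (simp add: power_mult_distrib)
    finally have "(a k)^2 \<le> (sqrt (4 * KK * real n) * C * c2^k)^2" .
    hence ak: "a k \<le> sqrt (4 * KK * real n) * C * c2^k"
    proof (rule power2_le_imp_le)
      have "sqrt (4 * KK * real n) \<ge> 0" using KK0 by simp
      moreover have "c2^k \<ge> 0" using c2 by simp
      ultimately show "0 \<le> sqrt (4 * KK * real n) * C * c2^k" using C0 by simp
    qed
    have "a (k+2) \<le> Del^m * a (k+1)" unfolding a_def using cycle_growth[of "k+1" i] k i by simp
    also have "\<dots> \<le> Del^m * (Del^m * a k)" unfolding a_def using cycle_growth[OF k i] D0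
      by (intro mult_left_mono) auto
    also have "\<dots> \<le> Del^m * (Del^m * (sqrt (4 * KK * real n) * C * c2^k))"
      using ak D0 by (intro mult_left_mono) auto
    also have "\<dots> = M * c2^k"
    proof -
      have pw: "Del^(2*m) = Del^m * Del^m" by (simp add: mult_2 power_add)
      show ?thesis unfolding M_def pw by (simp only: mult_ac)
    qed
    finally show ?thesis by simp
  qed
  from geo_rec[of c2 a M] rec c2 show ?thesis unfolding a_def by auto
qed

lemma Qp: "p \<le> n \<Longrightarrow> \<exists>C. \<forall>k\<ge>1. \<forall>i<n. (\<exists>j\<in>{1..p}. d i = lam j) \<longrightarrow> \<bar>zc k 1 i\<bar> \<le> C * c2^k"
proof (induct p)
  case 0 thus ?case by auto
next
  case (Suc p)
  then obtain C where C: "\<forall>k\<ge>1. \<forall>i<n. (\<exists>j\<in>{1..p}. d i = lam j) \<longrightarrow> \<bar>zc k 1 i\<bar> \<le> C * c2^k" by auto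
  define C' where "C' = max C 0"
  have C'0: "C' \<ge> 0" unfolding C'_def by auto
  have C': "\<forall>k\<ge>1. \<forall>i<n. (\<exists>j\<in>{1..p}. d i = lam j) \<longrightarrow> \<bar>zc k 1 i\<bar> \<le> C' * c2^k"
  proof (intro allI impI)
    fix k i assume "(k::nat) \<ge> 1" "i < n" "\<exists>j\<in>{1..p}. d i = lam j"
    hence "\<bar>zc k 1 i\<bar> \<le> C * c2^k" using C by auto
    also have "\<dots> \<le> C' * c2^k" unfolding C'_def using c2 by (intro mult_right_mono) auto
    finally show "\<bar>zc k 1 i\<bar> \<le> C' * c2^k" .
  qed
  let ?I = "{i. i < n \<and> (\<exists>j\<in>{1..Suc p}. d i = lam j)}"
  have "\<forall>i\<in>?I. \<exists>Ci. \<forall>k\<ge>1. \<bar>zc k 1 i\<bar> \<le> Ci * c2^k"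
  proof
    fix i assume i: "i \<in> ?I"
    show "\<exists>Ci. \<forall>k\<ge>1. \<bar>zc k 1 i\<bar> \<le> Ci * c2^k"
    proof (cases "\<exists>j\<in>{1..p}. d i = lam j")
      case True thus ?thesis using C' i by auto
    next
      case False
      hence "d i = lam (p+1)" using i by (auto simp: le_Suc_eq)
      thus ?thesis using induct_step[OF _ C'0 C'] Suc(2) i by auto
    qed
  qed
  moreover have "finite ?I" by auto
  moreover have "c2 \<ge> 0" using c2 by auto
  ultimately obtain C2 where C2: "\<forall>i\<in>?I. \<forall>k\<ge>1. \<bar>zc k 1 i\<bar> \<le> C2 * c2^k"
    using fin_unif[of ?I c2 "\<lambda>i k. \<bar>zc k 1 i\<bar>"] by blast
  show ?case
  proof (intro exI[of _ C2] allI impI)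
    fix k i assume "(k::nat) \<ge> 1" "i < n" "\<exists>j\<in>{1..Suc p}. d i = lam j"
    thus "\<bar>zc k 1 i\<bar> \<le> C2 * c2^k" using C2 by blast
  qed
qed

lemma final: "\<exists>c1>0. \<forall>k\<ge>1. vnorm (g k 1) \<le> c1 * c2 ^ k * vnorm (g 1 1)"
proof -
  obtain C where C: "\<forall>k\<ge>1. \<forall>i<n. (\<exists>j\<in>{1..n}. d i = lam j) \<longrightarrow> \<bar>zc k 1 i\<bar> \<le> C * c2^k"
    using Qp[of n] by auto
  define C' where "C' = max C 0"
  have C'0: "C' \<ge> 0" unfolding C'_def by auto
  have Ci: "\<bar>zc k 1 i\<bar> \<le> C' * c2^k" if "k \<ge> 1" "i < n" for k i
  proof -
    have "\<bar>zc k 1 i\<bar> \<le> C * c2^k" using C d_lam that by blast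
    also have "\<dots> \<le> C' * c2^k" unfolding C'_def using c2 by (intro mult_right_mono) auto
    finally show ?thesis .
  qed
  have g11: "g 1 1 \<in> carrier_vec n" using gcar by auto
  have gpos: "vnorm (g 1 1) > 0" using sp_self_pos[OF g11] gnz m_pos unfolding vnorm_def by auto
  define c1 where "c1 = (sqrt (real n) * C' + 1) / vnorm (g 1 1)"
  have c1: "c1 > 0" unfolding c1_def using gpos C'0 by (simp add: add_nonneg_pos)
  show ?thesis
  proof (intro exI[of _ c1] conjI allI impI c1)
    fix k :: nat assume k: "k \<ge> 1"
    have "g k 1 \<bullet> g k 1 = (\<Sum>i<n. (zc k 1 i)^2)" using gnorm[OF k] by auto
    also have "\<dots> \<le> (\<Sum>i<n. (C' * c2^k)^2)"
    proof (rule sum_mono)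
      fix i assume "i \<in> {..<n}"
      hence "\<bar>zc k 1 i\<bar>^2 \<le> (C' * c2^k)^2" using Ci[OF k] by (intro power_mono) auto
      thus "(zc k 1 i)^2 \<le> (C' * c2^k)^2" by simp
    qed
    also have "\<dots> = (sqrt (real n) * C' * c2^k)^2" by (simp add: power_mult_distrib)
    finally have "sqrt (g k 1 \<bullet> g k 1) \<le> sqrt ((sqrt (real n) * C' * c2^k)^2)" by (rule real_sqrt_le_mono)
    also have "\<dots> = sqrt (real n) * C' * c2^k" unfolding real_sqrt_abs
    proof (rule abs_of_nonneg)
      show "0 \<le> sqrt (real n) * C' * c2^k" using C'0 c2 by simp
    qed
    finally have "vnorm (g k 1) \<le> sqrt (real n) * C' * c2^k" unfolding vnorm_def .
    also have "\<dots> \<le> (sqrt (real n) * C' + 1) * c2^k" using c2 by (simp add: algebra_simps)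
    also have "\<dots> = c1 * c2 ^ k * vnorm (g 1 1)" unfolding c1_def using gpos by simp
    finally show "vnorm (g k 1) \<le> c1 * c2 ^ k * vnorm (g 1 1)" .
  qed
qed

end

theorem mainTheorem8:
  fixes n m :: nat and \<rho> :: real and lam :: "nat \<Rightarrow> real"
  assumes m_pos: "m \<ge> 1"
    and rho: "\<rho> \<ge> 1"
    and lam_pos: "\<forall>i\<in>{1..n}. 0 < lam i"
    and lam_sorted: "\<forall>i j. 1 \<le> i \<longrightarrow> i \<le> j \<longrightarrow> j \<le> n \<longrightarrow> lam i \<le> lam j"
  shows "\<exists>c2. 0 < c2 \<and> c2 < 1 \<and>
    (\<forall>(A :: real mat) (b :: real vec) (x :: nat \<Rightarrow> nat \<Rightarrow> real vec) (\<alpha> :: nat \<Rightarrow> nat \<Rightarrow> real)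
        (Q :: nat \<Rightarrow> real mat) (R :: nat \<Rightarrow> real mat) (\<theta> :: nat \<Rightarrow> nat \<Rightarrow> real)
        (g :: nat \<Rightarrow> nat \<Rightarrow> real vec).
      A \<in> carrier_mat n n \<and> transpose_mat A = A \<and>
      (\<forall>v\<in>carrier_vec n. v \<noteq> 0\<^sub>v n \<longrightarrow> v \<bullet> (A *\<^sub>v v) > 0) \<and>
      eigs_with_mult n A lam \<and>
      b \<in> carrier_vec n \<and> x 1 1 \<in> carrier_vec n \<and>
      (\<forall>j\<in>{1..m}. 0 < \<alpha> 1 j) \<and>
      (\<forall>k\<ge>1. \<forall>j\<in>{1..m+1}. g k j = A *\<^sub>v x k j - b) \<and>
      (\<forall>k\<ge>1. \<forall>j\<in>{1..m}. x k (j + 1) = x k j - \<alpha> k j \<cdot>\<^sub>v g k j) \<and>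
      (\<forall>k\<ge>1. x (k + 1) 1 = x k (m + 1)) \<and>
      (\<forall>k\<ge>1. Q k \<in> carrier_mat n m \<and> R k \<in> carrier_mat m m \<and>
         cols_mat n m (g k) = Q k * R k \<and>
         transpose_mat (Q k) * Q k = 1\<^sub>m m \<and> upper_triangular (R k)) \<and>
      (\<forall>k\<ge>1. eigs_with_mult m (transpose_mat (Q k) * A * Q k) (\<theta> k) \<and>
         (\<forall>i j. 1 \<le> i \<longrightarrow> i \<le> j \<longrightarrow> j \<le> m \<longrightarrow> \<theta> k j \<le> \<theta> k i)) \<and>
      (\<forall>k\<ge>1. \<forall>j\<in>{1..m}. \<alpha> (k + 1) j = 1 / \<theta> k j) \<and>
      (\<forall>k\<ge>1. \<forall>j\<in>{1..m}. g k j \<noteq> 0\<^sub>v n) \<and>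
      (\<forall>k\<ge>1. \<forall>c\<in>carrier_vec m. cols_mat n m (g k) *\<^sub>v c = 0\<^sub>v n \<longrightarrow> c = 0\<^sub>v m) \<and>
      (\<forall>k\<ge>1. \<exists>Ri. Ri \<in> carrier_mat m m \<and> R k * Ri = 1\<^sub>m m \<and> Ri * R k = 1\<^sub>m m \<and>
         spec_norm Ri \<le> \<rho> / vnorm (g k 1))
      \<longrightarrow> (\<exists>c1 > 0. \<forall>k\<ge>1. vnorm (g k 1) \<le> c1 * c2 ^ k * vnorm (g 1 1)))"
proof -
  define c2 where "c2 = (if n = 0 then 1/2 else max (1/2) ((max (1/3) (1 - lam 1 / lam n))^m))"
  have c2b: "0 < c2 \<and> c2 < 1"
  proof (cases "n = 0")
    case False
    have "0 < lam 1" "lam 1 \<le> lam n" using lam_pos lam_sorted False by auto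
    hence q: "0 \<le> max (1/3) (1 - lam 1 / lam n)" "max (1/3) (1 - lam 1 / lam n) < 1" by (auto simp: field_simps)
    hence "(max (1/3) (1 - lam 1 / lam n))^m < 1" using m_pos by (simp add: power_less_one_iff)
    thus ?thesis unfolding c2_def using False by auto
  qed (simp add: c2_def)
  show ?thesis
  proof (rule exI[of _ c2], rule conjI[OF _ conjI], goal_cases)
    case 1 show ?case using c2b by auto
  next
    case 2 show ?case using c2b by auto
  next
    case 3 show ?case
    proof (intro allI impI, goal_cases)
    case (1 A b x \<alpha> Q R \<theta> g)
    note H = 1
    interpret L: lmsd n m \<rho> lam A b x \<alpha> Q R \<theta> g
    proof (rule lmsd.intro)
    qed (insert H m_pos rho lam_pos lam_sorted, (elim conjE)?, assumption)+
    have "L.c2 = c2" unfolding L.c2_def L.qq_def c2_def using L.n_pos by auto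
    thus ?case using L.final by simp
  qed
  qed
qed

end
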